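(* Let $X$ be a separable Fréchet space and $p$ a non-trivial continuous seminorm on $X$. Then for every dense countable set $A\subseteq X$ there is $B\subseteq A$ such that $B$ is $p$-independent and dense in $X$.
   Context: A Fréchet space is a complete metrizable locally convex (Hausdorff) space over $\mathbb{K}\in\{\mathbb{R},\mathbb{C}\}$. For a seminorm $p$, $\ker p=\{x:p(x)=0\}$; $p$ is non-trivial if $X/\ker p$ is infinite dimensional. A set $A\subseteq X$ is $p$-independent if $p(z_1a_1+\dots+z_na_n)\neq0$ for every $n\in\mathbb{N}$, pairwise distinct $a_1,\dots,a_n\in A$ and nonzero $z_1,\dots,z_n\in\mathbb{K}$. *)

theory Defs
  imports "HOL-Analysis.Analysis"
begin

text \<open>Vector spaces over a scalar field 'k with scalar multiplication smul.
  The scalar field is a complete real normed field, i.e. (Gelfand-Mazur) R or C.\<close>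

definition convex_wrt :: "('k::real_normed_field \<Rightarrow> 'a::ab_group_add \<Rightarrow> 'a) \<Rightarrow> 'a set \<Rightarrow> bool" where
  "convex_wrt smul V \<longleftrightarrow>
     (\<forall>x\<in>V. \<forall>y\<in>V. \<forall>t::real. 0 \<le> t \<and> t \<le> 1 \<longrightarrow>
        smul (of_real t) x + smul (of_real (1 - t)) y \<in> V)"

text \<open>Hausdorffness is automatic for a metric.\<close>
definition frechet_space :: "('k::{real_normed_field,banach} \<Rightarrow> 'a::{ab_group_add,complete_space} \<Rightarrow> 'a) \<Rightarrow> bool" where
  "frechet_space smul \<longleftrightarrow>
     vector_space smul \<and>
     (\<forall>x y z::'a. dist (x + z) (y + z) = dist x y) \<and>
     continuous_on UNIV (\<lambda>w::'k \<times> 'a. smul (fst w) (snd w)) \<and>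
     (\<forall>U::'a set. open U \<and> 0 \<in> U \<longrightarrow>
        (\<exists>V. open V \<and> 0 \<in> V \<and> V \<subseteq> U \<and> convex_wrt smul V))"

definition separable_type :: "'a::topological_space itself \<Rightarrow> bool" where
  "separable_type _ \<longleftrightarrow> (\<exists>D::'a set. countable D \<and> closure D = UNIV)"

definition seminorm_wrt :: "('k::real_normed_field \<Rightarrow> 'a::ab_group_add \<Rightarrow> 'a) \<Rightarrow> ('a \<Rightarrow> real) \<Rightarrow> bool" where
  "seminorm_wrt smul p \<longleftrightarrow>
     (\<forall>x y. p (x + y) \<le> p x + p y) \<and> (\<forall>c x. p (smul c x) = norm c * p x)"

definition seminorm_kernel :: "('a \<Rightarrow> real) \<Rightarrow> 'a set" where
  "seminorm_kernel p = {x. p x = 0}"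

text \<open>p non-trivial: X / ker p is infinite dimensional, i.e. there is no finite F
  with X = span F + ker p.\<close>
definition nontrivial_seminorm :: "('k::field \<Rightarrow> 'a::ab_group_add \<Rightarrow> 'a) \<Rightarrow> ('a \<Rightarrow> real) \<Rightarrow> bool" where
  "nontrivial_seminorm smul p \<longleftrightarrow>
     \<not> (\<exists>F. finite F \<and> (\<forall>x. \<exists>y\<in>module.span smul F. x - y \<in> seminorm_kernel p))"

definition p_independent :: "('k::field \<Rightarrow> 'a::ab_group_add \<Rightarrow> 'a) \<Rightarrow> ('a \<Rightarrow> real) \<Rightarrow> 'a set \<Rightarrow> bool" where
  "p_independent smul p A \<longleftrightarrow>
     (\<forall>S z. finite S \<and> S \<noteq> {} \<and> S \<subseteq> A \<and> (\<forall>a\<in>S. z a \<noteq> 0) \<longrightarrow>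
        p (\<Sum>a\<in>S. smul (z a) a) \<noteq> 0)"

end

theory Submission
  imports Defs
begin

locale psn = vector_space smul
  for smul :: "'k::{real_normed_field,banach} \<Rightarrow> 'a::ab_group_add \<Rightarrow> 'a" +
  fixes p :: "'a \<Rightarrow> real"
  assumes ptri: "p (x + y) \<le> p x + p y"
    and phom: "p (smul c x) = norm c * p x"
begin

definition WW :: "'a set \<Rightarrow> 'a set" where
  "WW F = {x. \<exists>y\<in>span F. p (x - y) = 0}"

definition pclosed :: "'a set \<Rightarrow> bool" where
  "pclosed S \<longleftrightarrow> (\<forall>x. (\<forall>e>0. \<exists>w\<in>S. p (x - w) < e) \<longrightarrow> x \<in> S)"

lemma p0[simp]: "p 0 = 0"
  using phom[of 0 0] by simp

lemma pneg: "p (- x) = p x"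
  using phom[of "-1" x] by simp

lemma pnonneg: "0 \<le> p x"
  using ptri[of x "-x"] pneg[of x] by simp

lemma psym: "p (x - y) = p (y - x)"
  using pneg[of "x - y"] by simp

lemma pdiff_le: "p (u - v) \<le> p u + p v"
  using ptri[of u "- v"] pneg[of v] by simp

lemma ptri3: "p (x - z) \<le> p (x - y) + p (y - z)"
  using ptri[of "x - y" "y - z"] by simp

lemma span_in_WW: "y \<in> span F \<Longrightarrow> y \<in> WW F"
  unfolding WW_def by (intro CollectI bexI[of _ y]) auto

lemma pclosed_empty: "pclosed (WW {})"
  unfolding pclosed_def WW_def
proof (intro allI impI)
  fix x assume h: "\<forall>e>0. \<exists>w\<in>{x. \<exists>y\<in>span {}. p (x - y) = 0}. p (x - w) < e"
  have "p x \<le> 0"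
  proof (rule field_le_epsilon)
    fix e :: real assume "0 < e"
    then obtain w where "p (w - 0) = 0" "p (x - w) < e" using h by auto
    then show "p x \<le> 0 + e" using ptri3[of x 0 w] by simp
  qed
  then show "x \<in> {x. \<exists>y\<in>span {}. p (x - y) = 0}"
    using pnonneg[of x] by auto
qed

lemma indep_insert:
  assumes "p_independent smul p F" "a \<notin> WW F"
  shows "p_independent smul p (insert a F)"
  unfolding p_independent_def
proof (intro allI impI)
  fix S and z :: "'a \<Rightarrow> 'k" assume h: "finite S \<and> S \<noteq> {} \<and> S \<subseteq> insert a F \<and> (\<forall>a\<in>S. z a \<noteq> 0)"
  show "p (\<Sum>a\<in>S. smul (z a) a) \<noteq> 0"
  proof (cases "a \<in> S")
    case False
    then have "S \<subseteq> F" using h by auto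
    then show ?thesis using assms(1) h unfolding p_independent_def by blast
  next
    case True
    have za: "z a \<noteq> 0" using h True by auto
    define r where "r = (\<Sum>s\<in>S - {a}. smul (z s) s)"
    have sum: "(\<Sum>a\<in>S. smul (z a) a) = smul (z a) a + r"
      unfolding r_def using h True by (simp add: sum.remove)
    have "S - {a} \<subseteq> F" using h by auto
    then have rs: "r \<in> span F" unfolding r_def
      by (intro span_sum span_scale span_base) auto
    define y where "y = - smul (inverse (z a)) r"
    have ys: "y \<in> span F" unfolding y_def by (intro span_neg span_scale rs)
    have "a - y = smul (inverse (z a)) (smul (z a) a + r)"
      unfolding y_def using za by (simp add: scale_right_distrib)
    show ?thesis
    proof
      assume "p (\<Sum>a\<in>S. smul (z a) a) = 0"
      then have "p (a - y) = 0" using \<open>a - y = _\<close> sum phom by simp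
      then have "a \<in> WW F" using ys unfolding WW_def by auto
      then show False using assms(2) by simp
    qed
  qed
qed

lemma pclosed_sep:
  assumes "pclosed S" "v \<notin> S"
  shows "\<exists>e>0. \<forall>w\<in>S. e \<le> p (v - w)"
  using assms unfolding pclosed_def by (meson not_le)

lemma pclosed_insert:
  assumes pc: "pclosed (WW F)" and f: "f \<notin> WW F"
  shows "pclosed (WW (insert f F))"
proof -
  obtain \<epsilon> where ep: "\<epsilon> > 0" "\<And>w. w \<in> WW F \<Longrightarrow> \<epsilon> \<le> p (f - w)"
    using pclosed_sep[OF pc f] by auto
  have lower: "norm c * \<epsilon> \<le> p (smul c f - y)" if y: "y \<in> span F" for c y
  proof (cases "c = 0")
    case True then show ?thesis using pnonneg by simp
  next
    case False
    have "smul c f - y = smul c (f - smul (inverse c) y)"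
      using False by (simp add: scale_right_diff_distrib)
    then have "p (smul c f - y) = norm c * p (f - smul (inverse c) y)" using phom by simp
    moreover have "\<epsilon> \<le> p (f - smul (inverse c) y)"
      by (intro ep(2) span_in_WW span_scale y)
    ultimately show ?thesis by (simp add: mult_left_mono)
  qed
  show ?thesis unfolding pclosed_def
  proof (intro allI impI)
    fix x assume hx: "\<forall>e>0. \<exists>w\<in>WW (insert f F). p (x - w) < e"
    have "\<exists>c y. y \<in> span F \<and> p (x - (y + smul c f)) < 1 / real (Suc k)" for k
    proof -
      obtain w where w: "w \<in> WW (insert f F)" "p (x - w) < 1 / real (Suc k)"
        using hx by (metis of_nat_0_less_iff zero_less_Suc zero_less_divide_1_iff)
      then obtain y' where y': "y' \<in> span (insert f F)" "p (w - y') = 0"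
        unfolding WW_def by auto
      then obtain c where c: "y' - smul c f \<in> span F" using span_breakdown_eq by blast
      have "p (x - y') < 1 / real (Suc k)" using ptri3[of x y' w] w y' by simp
      then show ?thesis using c by (intro exI[of _ c] exI[of _ "y' - smul c f"]) simp
    qed
    then obtain cs ys where cy: "\<And>k. ys k \<in> span F"
      "\<And>k. p (x - (ys k + smul (cs k) f)) < 1 / real (Suc k)"
      by metis
    have bnd: "norm (cs k - cs l) * \<epsilon> \<le> 1 / real (Suc k) + 1 / real (Suc l)" for k l
    proof -
      have eq: "smul (cs k - cs l) f - (ys l - ys k) =
          (x - (ys l + smul (cs l) f)) - (x - (ys k + smul (cs k) f))"
        by (simp add: scale_left_diff_distrib algebra_simps)
      have "norm (cs k - cs l) * \<epsilon> \<le> p (smul (cs k - cs l) f - (ys l - ys k))"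
        by (intro lower span_diff cy)
      also have "\<dots> \<le> p (x - (ys l + smul (cs l) f)) + p (x - (ys k + smul (cs k) f))"
        unfolding eq by (rule pdiff_le)
      finally show ?thesis using cy(2)[of k] cy(2)[of l] by linarith
    qed
    have "Cauchy cs"
    proof (rule metric_CauchyI)
      fix e :: real assume e: "0 < e"
      obtain M where M: "inverse (real (Suc M)) < e * \<epsilon> / 2"
        using reals_Archimedean[of "e * \<epsilon> / 2"] e ep(1) by auto
      show "\<exists>M. \<forall>m\<ge>M. \<forall>n\<ge>M. dist (cs m) (cs n) < e"
      proof (intro exI allI impI)
        fix m n assume mn: "M \<le> m" "M \<le> n"
        have "1 / real (Suc m) \<le> inverse (real (Suc M))" "1 / real (Suc n) \<le> inverse (real (Suc M))"
          using mn by (simp_all add: divide_simps)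
        then have "norm (cs m - cs n) * \<epsilon> < e * \<epsilon>" using bnd[of m n] M by linarith
        then show "dist (cs m) (cs n) < e" using ep(1) by (simp add: dist_norm)
      qed
    qed
    then obtain c where c: "cs \<longlonglongrightarrow> c" using Cauchy_convergent_iff convergent_def by blast
    have "x - smul c f \<in> WW F"
      using pc unfolding pclosed_def
    proof (elim allE impE)
      show "\<forall>e>0. \<exists>w\<in>WW F. p (x - smul c f - w) < e"
      proof (intro allI impI)
        fix e :: real assume e: "0 < e"
        obtain k1 where k1: "inverse (real (Suc k1)) < e / 2"
          using reals_Archimedean[of "e / 2"] e by auto
        have "e / 2 / (p f + 1) > 0" using e pnonneg[of f] by simp
        then obtain k2 where k2: "\<And>n. n \<ge> k2 \<Longrightarrow> norm (cs n - c) < e / 2 / (p f + 1)"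
          using c unfolding LIMSEQ_iff by blast
        define k where "k = max k1 k2"
        have "1 / real (Suc k) \<le> inverse (real (Suc k1))" unfolding k_def by (simp add: divide_simps)
        have nk: "norm (cs k - c) < e / 2 / (p f + 1)" using k2 unfolding k_def by simp
        have "norm (cs k - c) * p f \<le> norm (cs k - c) * (p f + 1)" by (simp add: mult_left_mono)
        also have "\<dots> \<le> e / 2" using nk pnonneg[of f]
          by (simp add: pos_less_divide_eq less_imp_le algebra_simps)
        finally have np: "norm (cs k - c) * p f \<le> e / 2" .
        have eq: "x - smul c f - ys k = (x - (ys k + smul (cs k) f)) - (smul (c - cs k) f)"
          by (simp add: scale_left_diff_distrib algebra_simps)
        have "p (x - smul c f - ys k) \<le> p (x - (ys k + smul (cs k) f)) + p (smul (c - cs k) f)"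
          unfolding eq by (rule pdiff_le)
        also have "p (smul (c - cs k) f) = norm (cs k - c) * p f"
          by (simp add: phom norm_minus_commute)
        finally have "p (x - smul c f - ys k) < e"
          using cy(2)[of k] \<open>1 / real (Suc k) \<le> _\<close> k1 np by linarith
        then show "\<exists>w\<in>WW F. p (x - smul c f - w) < e"
          using span_in_WW[OF cy(1)[of k]] by blast
      qed
    qed
    then obtain y where y: "y \<in> span F" "p (x - smul c f - y) = 0" unfolding WW_def by auto
    have "y + smul c f \<in> span (insert f F)"
      using y(1) unfolding span_breakdown_eq by (intro exI[of _ c]) simp
    moreover have "x - (y + smul c f) = x - smul c f - y" by simp
    ultimately show "x \<in> WW (insert f F)" using y(2) unfolding WW_def by (intro CollectI bexI[of _ "y + smul c f"]) (simp_all add: diff_diff_eq add.commute)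
  qed
qed

end

theorem lemma4p3:
  fixes smul :: "'k::{real_normed_field,banach} \<Rightarrow> 'a::{ab_group_add,complete_space} \<Rightarrow> 'a"
    and p :: "'a \<Rightarrow> real"
  assumes "frechet_space smul"
    and "separable_type TYPE('a)"
    and "seminorm_wrt smul p"
    and "continuous_on UNIV p"
    and "nontrivial_seminorm smul p"
    and "countable A" and "closure A = UNIV"
  shows "\<exists>B\<subseteq>A. p_independent smul p B \<and> closure B = UNIV"
proof -
  have vs: "vector_space smul" and inv: "\<And>x y z::'a. dist (x + z) (y + z) = dist x y"
    and sc: "continuous_on UNIV (\<lambda>w::'k \<times> 'a. smul (fst w) (snd w))"
    using assms(1) unfolding frechet_space_def by auto
  have "psn smul p" unfolding psn_def psn_axioms_def
    using vs assms(3) unfolding seminorm_wrt_def by auto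
  then interpret P: psn smul p .
  have dsub: "dist (x - v) (y - v) = dist x y" for x y v :: 'a
    using inv[of "x - v" v "y - v"] by simp
  have contsub: "continuous_on UNIV (\<lambda>x. x - v)" for v :: 'a
    unfolding continuous_on_iff using dsub by metis
  have contp: "continuous_on UNIV (\<lambda>x. p (x - v))" for v
    using continuous_on_compose[OF contsub assms(4)[THEN continuous_on_subset]] by (simp add: o_def)
  have T1: "\<exists>a\<in>A \<inter> U. a \<notin> P.WW F" if pc: "P.pclosed (P.WW F)" and fin: "finite F"
    and U: "open U" "U \<noteq> {}" for F U
  proof -
    obtain x0 where x0: "x0 \<notin> P.WW F"
      using assms(5) fin unfolding nontrivial_seminorm_def seminorm_kernel_def P.WW_def by blast
    obtain u where u: "u \<in> U" using U by auto
    have "\<exists>v\<in>U. v \<notin> P.WW F"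
    proof (cases "u \<in> P.WW F")
      case False then show ?thesis using u by auto
    next
      case True
      define t :: "nat \<Rightarrow> 'k" where "t n = of_real (inverse (real (Suc n)))" for n
      have t0: "t \<longlonglongrightarrow> 0" unfolding t_def
        using tendsto_of_real[OF LIMSEQ_inverse_real_of_nat, where 'a='k] by simp
      have pr: "(\<lambda>n. (t n, x0)) \<longlonglongrightarrow> (0, x0)" by (intro tendsto_Pair t0 tendsto_const)
      have "(\<lambda>n. smul (fst (t n, x0)) (snd (t n, x0))) \<longlonglongrightarrow> smul (fst (0, x0)) (snd (0, x0))"
        using continuous_on_tendsto_compose[OF sc pr] by simp
      then have s0: "(\<lambda>n. smul (t n) x0) \<longlonglongrightarrow> 0" by simp
      have "(\<lambda>n. u + smul (t n) x0) \<longlonglongrightarrow> u"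
        unfolding tendsto_iff
      proof (intro allI impI)
        fix e :: real assume "0 < e"
        then have "\<forall>\<^sub>F n in sequentially. dist (smul (t n) x0) 0 < e" using s0 unfolding tendsto_iff by blast
        then show "\<forall>\<^sub>F n in sequentially. dist (u + smul (t n) x0) u < e"
        proof (rule eventually_mono)
          fix n assume "dist (smul (t n) x0) 0 < e"
          moreover have "dist (u + smul (t n) x0) u = dist (smul (t n) x0) 0"
          proof -
            have "dist (smul (t n) x0 + u) (0 + u) = dist (smul (t n) x0) 0" by (rule inv)
            then show ?thesis by (simp only: add.commute[of u] add_0_left)
          qed
          ultimately show "dist (u + smul (t n) x0) u < e" by simp
        qed
      qed
      then have "\<forall>\<^sub>F n in sequentially. u + smul (t n) x0 \<in> U"
        using U(1) u by (simp add: topological_tendstoD)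
      then obtain n where n: "u + smul (t n) x0 \<in> U" by (meson eventually_sequentially order_refl)
      have tn: "t n \<noteq> 0" unfolding t_def of_real_eq_0_iff by (simp del: of_real_inverse of_real_of_nat_eq)
      show ?thesis
      proof (intro bexI[OF _ n] notI)
        assume "u + smul (t n) x0 \<in> P.WW F"
        then obtain y2 where y2: "y2 \<in> P.span F" "p (u + smul (t n) x0 - y2) = 0" unfolding P.WW_def by auto
        obtain y1 where y1: "y1 \<in> P.span F" "p (u - y1) = 0" using True unfolding P.WW_def by auto
        have eq: "smul (t n) x0 - (y2 - y1) = (u + smul (t n) x0 - y2) - (u - y1)" by (simp add: algebra_simps)
        have "p (smul (t n) x0 - (y2 - y1)) \<le> p (u + smul (t n) x0 - y2) + p (u - y1)"
          unfolding eq by (rule P.pdiff_le)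
        then have "p (smul (t n) x0 - (y2 - y1)) \<le> 0" using y1(2) y2(2) by linarith
        then have z: "p (smul (t n) x0 - (y2 - y1)) = 0" using P.pnonneg by (meson order_antisym)
        have "x0 - smul (inverse (t n)) (y2 - y1) = smul (inverse (t n)) (smul (t n) x0 - (y2 - y1))"
          using tn by (simp add: P.scale_right_diff_distrib)
        then have "p (x0 - smul (inverse (t n)) (y2 - y1)) = 0" using z P.phom by simp
        moreover have "smul (inverse (t n)) (y2 - y1) \<in> P.span F"
          by (intro P.span_scale P.span_diff y1 y2)
        ultimately show False using x0 unfolding P.WW_def by blast
      qed
    qed
    then obtain v where v: "v \<in> U" "v \<notin> P.WW F" by blast
    obtain e where e: "e > 0" "\<And>w. w \<in> P.WW F \<Longrightarrow> e \<le> p (v - w)"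
      using P.pclosed_sep[OF pc v(2)] by auto
    define Ob where "Ob = U \<inter> {x. p (x - v) < e}"
    have "open Ob" unfolding Ob_def
      by (intro open_Int U(1) open_Collect_less contp continuous_on_const)
    moreover have "v \<in> Ob" unfolding Ob_def using v e by simp
    ultimately have "Ob \<inter> A \<noteq> {}" using open_Int_closure_eq_empty[of Ob A] assms(7) by auto
    then obtain a where a: "a \<in> A" "a \<in> U" "p (a - v) < e" unfolding Ob_def by auto
    have "a \<notin> P.WW F"
    proof
      assume "a \<in> P.WW F"
      then have "e \<le> p (v - a)" by (rule e(2))
      then show False using a(3) P.psym[of a v] by simp
    qed
    then show ?thesis using a by auto
  qed
  have Ane: "A \<noteq> {}" using assms(7) by auto
  define g where "g = from_nat_into A"
  have gA: "g i \<in> A" for i unfolding g_def using from_nat_into[OF Ane] .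
  define Bl where "Bl n = ball (g (fst (prod_decode n))) (1 / real (Suc (snd (prod_decode n))))" for n
  have Bl: "open (Bl n)" "Bl n \<noteq> {}" for n unfolding Bl_def by auto
  define nxt where "nxt F n = (SOME a. a \<in> A \<inter> Bl n \<and> a \<notin> P.WW F)" for F n
  define Fs where "Fs = rec_nat {} (\<lambda>n F. insert (nxt F n) F)"
  have Fs0: "Fs 0 = {}" and FsS: "Fs (Suc n) = insert (nxt (Fs n) n) (Fs n)" for n
    unfolding Fs_def by simp_all
  have invar: "finite (Fs n) \<and> Fs n \<subseteq> A \<and> p_independent smul p (Fs n) \<and> P.pclosed (P.WW (Fs n))
      \<and> (n > 0 \<longrightarrow> nxt (Fs (n - 1)) (n - 1) \<in> A \<inter> Bl (n - 1))" for n
  proof (induction n)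
    case 0
    then show ?case using P.pclosed_empty unfolding Fs0 p_independent_def by auto
  next
    case (Suc n)
    then have "\<exists>a. a \<in> A \<inter> Bl n \<and> a \<notin> P.WW (Fs n)" using T1[OF _ _ Bl(1) Bl(2)] by blast
    then have "nxt (Fs n) n \<in> A \<inter> Bl n \<and> nxt (Fs n) n \<notin> P.WW (Fs n)"
      unfolding nxt_def by (rule someI_ex)
    then have nx: "nxt (Fs n) n \<in> A \<inter> Bl n" "nxt (Fs n) n \<notin> P.WW (Fs n)" by auto
    have IH: "finite (Fs n)" "Fs n \<subseteq> A" "p_independent smul p (Fs n)" "P.pclosed (P.WW (Fs n))"
      using Suc.IH by auto
    have "p_independent smul p (insert (nxt (Fs n) n) (Fs n))" by (rule P.indep_insert[OF IH(3) nx(2)])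
    moreover have "P.pclosed (P.WW (insert (nxt (Fs n) n) (Fs n)))" by (rule P.pclosed_insert[OF IH(4) nx(2)])
    moreover have "finite (insert (nxt (Fs n) n) (Fs n))" using IH(1) by simp
    moreover have "insert (nxt (Fs n) n) (Fs n) \<subseteq> A" using IH(2) nx(1) by simp
    ultimately show ?case unfolding FsS using nx(1) by simp
  qed
  have mono: "Fs m \<subseteq> Fs n" if "m \<le> n" for m n
    using that by (induction n) (auto simp: FsS le_Suc_eq)
  define B where "B = (\<Union>n. Fs n)"
  have fin_sub: "finite S \<Longrightarrow> S \<subseteq> B \<Longrightarrow> \<exists>n. S \<subseteq> Fs n" for S
  proof (induction S rule: finite_induct)
    case empty then show ?case by auto
  next
    case (insert x S)
    then obtain n m where "S \<subseteq> Fs n" "x \<in> Fs m" unfolding B_def by auto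
    then have "insert x S \<subseteq> Fs (max n m)" using mono[of n "max n m"] mono[of m "max n m"] by auto
    then show ?case by blast
  qed
  have FA: "Fs n \<subseteq> A" for n using invar[of n] by simp
  have "B \<subseteq> A" unfolding B_def using FA by (simp add: UN_least)
  moreover have "p_independent smul p B" unfolding p_independent_def
  proof (intro allI impI)
    fix S and z :: "'a \<Rightarrow> 'k"
    assume h: "finite S \<and> S \<noteq> {} \<and> S \<subseteq> B \<and> (\<forall>a\<in>S. z a \<noteq> 0)"
    then obtain n where "S \<subseteq> Fs n" using fin_sub by blast
    moreover have "p_independent smul p (Fs n)" using invar[of n] by simp
    ultimately show "p (\<Sum>a\<in>S. smul (z a) a) \<noteq> 0" using h unfolding p_independent_def by simp
  qed
  moreover have "closure B = UNIV"
  proof (intro set_eqI iffI UNIV_I)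
    fix x
    show "x \<in> closure B" unfolding closure_approachable
    proof (intro allI impI)
      fix e :: real assume e: "0 < e"
      obtain j where j: "inverse (real (Suc j)) < e / 2"
        using reals_Archimedean[of "e / 2"] e by auto
      have xA: "x \<in> closure A" using assms(7) by simp
      have pos: "(0::real) < 1 / real (Suc j)" by simp
      obtain a where a: "a \<in> A" "dist a x < 1 / real (Suc j)"
        using xA[unfolded closure_approachable, rule_format, OF pos] by blast
      have "a \<in> range g" using a(1) range_from_nat_into[OF Ane assms(6)] unfolding g_def by simp
      then obtain i where i: "a = g i" by blast
      define n where "n = prod_encode (i, j)"
      have "nxt (Fs n) n \<in> Bl n" using invar[of "Suc n"] by simp
      moreover have "Bl n = ball a (1 / real (Suc j))" unfolding Bl_def n_def i by simp
      ultimately have d: "dist a (nxt (Fs n) n) < 1 / real (Suc j)" by simp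
      have "nxt (Fs n) n \<in> B" unfolding B_def using FsS[of n] by blast
      moreover have "dist (nxt (Fs n) n) x < e"
      proof -
        have "dist (nxt (Fs n) n) x \<le> dist (nxt (Fs n) n) a + dist a x" by (rule dist_triangle)
        moreover have "dist (nxt (Fs n) n) a = dist a (nxt (Fs n) n)" by (rule dist_commute)
        moreover have "1 / real (Suc j) = inverse (real (Suc j))" by (simp add: divide_inverse)
        ultimately show ?thesis using d a(2) j by linarith
      qed
      ultimately show "\<exists>y\<in>B. dist y x < e" by blast
    qed
  qed
  ultimately show ?thesis by blast
qed

end
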